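(* Let $\mathbb{F}=\mathbb{F}^{[a,b]}_{(m,n)}(q)$ be a finite polyadic field. Then $\mathbb{F}$ has no proper subfield, i.e. there is no proper nonempty subset $S\subsetneq\mathbb{F}$ closed under $\nu_m$ and $\mu_n$ such that $S$ with the restricted operations is itself a polyadic $(m,n)$-field.
   Context: Let $b\in\mathbb{N}$, $0\le a\le b-1$, and let $m,n\ge2$ be the minimal integers with $ma\equiv a$ and $a^n\equiv a \pmod b$. For $q\in\mathbb{N}$, $\mathbb{F}^{[a,b]}_{(m,n)}(q)$ has underlying set $\{a+bk: 0\le k\le q-1\}$, with $m$-ary addition $\nu_m[x_1,\dots,x_m]$ = the element of the set congruent to $x_1+\dots+x_m$ modulo $bq$, and $n$-ary multiplication $\mu_n[x_1,\dots,x_n]$ = the element congruent to $x_1\cdots x_n$ modulo $bq$. An $(m,n)$-field is a set with a commutative $m$-ary addition and commutative $n$-ary multiplication satisfying polyadic distributivity, such that the addition makes it an $m$-ary group and the multiplication makes it (with the zero removed, if a zero $z$, i.e. an element with $\mu_n[x_1,\dots,x_{n-1},z]=z$ for all $x_i$, exists) an $n$-ary group; an $n$-ary group is a set with an associative $n$-ary operation in which every equation $\mu_n[x_1,\dots,x_{i-1},u,x_{i+1},\dots,x_n]=x_0$ has a unique solution $u$. $\mathbb{F}^{[a,b]}_{(m,n)}(q)$ is called a finite polyadic field when it is an $(m,n)$-field in this sense. *)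

theory Defs
  imports Main "HOL-Library.Multiset" "HOL-Number_Theory.Cong"
begin

text \<open>Polyadic operations are modelled as functions on lists; a k-ary operation
  is only ever applied to lists of length k with entries in the carrier.\<close>

definition closed_on :: "'a set \<Rightarrow> nat \<Rightarrow> ('a list \<Rightarrow> 'a) \<Rightarrow> bool" where
  "closed_on S k f \<longleftrightarrow> (\<forall>xs. length xs = k \<and> set xs \<subseteq> S \<longrightarrow> f xs \<in> S)"

definition commutative_on :: "'a set \<Rightarrow> nat \<Rightarrow> ('a list \<Rightarrow> 'a) \<Rightarrow> bool" where
  "commutative_on S k f \<longleftrightarrow>
     (\<forall>xs ys. length xs = k \<and> set xs \<subseteq> S \<and> mset ys = mset xs \<longrightarrow> f ys = f xs)"

definition associative_on :: "'a set \<Rightarrow> nat \<Rightarrow> ('a list \<Rightarrow> 'a) \<Rightarrow> bool" where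
  "associative_on S k f \<longleftrightarrow>
     (\<forall>xs i j. length xs = 2 * k - 1 \<and> set xs \<subseteq> S \<and> i < k \<and> j < k \<longrightarrow>
        f (take i xs @ [f (take k (drop i xs))] @ drop (i + k) xs)
        = f (take j xs @ [f (take k (drop j xs))] @ drop (j + k) xs))"

definition nary_group :: "'a set \<Rightarrow> nat \<Rightarrow> ('a list \<Rightarrow> 'a) \<Rightarrow> bool" where
  "nary_group S k f \<longleftrightarrow> S \<noteq> {} \<and> closed_on S k f \<and> associative_on S k f \<and>
     (\<forall>i xs x0. i < k \<and> length xs = k - 1 \<and> set xs \<subseteq> S \<and> x0 \<in> S \<longrightarrow>
        (\<exists>!u. u \<in> S \<and> f (take i xs @ u # drop i xs) = x0))"

definition is_zero :: "'a set \<Rightarrow> nat \<Rightarrow> ('a list \<Rightarrow> 'a) \<Rightarrow> 'a \<Rightarrow> bool" where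
  "is_zero S k f z \<longleftrightarrow> z \<in> S \<and>
     (\<forall>i xs. i < k \<and> length xs = k - 1 \<and> set xs \<subseteq> S \<longrightarrow> f (take i xs @ z # drop i xs) = z)"

definition distributive_on ::
  "'a set \<Rightarrow> nat \<Rightarrow> nat \<Rightarrow> ('a list \<Rightarrow> 'a) \<Rightarrow> ('a list \<Rightarrow> 'a) \<Rightarrow> bool" where
  "distributive_on S m n nu mu \<longleftrightarrow>
     (\<forall>i xs ys. i < n \<and> length xs = m \<and> length ys = n - 1 \<and> set xs \<subseteq> S \<and> set ys \<subseteq> S \<longrightarrow>
        mu (take i ys @ nu xs # drop i ys)
        = nu (map (\<lambda>x. mu (take i ys @ x # drop i ys)) xs))"

definition polyadic_field ::
  "'a set \<Rightarrow> nat \<Rightarrow> nat \<Rightarrow> ('a list \<Rightarrow> 'a) \<Rightarrow> ('a list \<Rightarrow> 'a) \<Rightarrow> bool" where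
  "polyadic_field S m n nu mu \<longleftrightarrow>
     2 \<le> m \<and> 2 \<le> n \<and>
     commutative_on S m nu \<and> commutative_on S n mu \<and>
     closed_on S n mu \<and> associative_on S n mu \<and>
     distributive_on S m n nu mu \<and>
     nary_group S m nu \<and>
     (if (\<exists>z. is_zero S n mu z)
      then (\<forall>z. is_zero S n mu z \<longrightarrow> nary_group (S - {z}) n mu)
      else nary_group S n mu)"

definition F_carrier :: "nat \<Rightarrow> nat \<Rightarrow> nat \<Rightarrow> nat set" where
  "F_carrier a b q = {a + b * k | k. k < q}"

definition F_red :: "nat \<Rightarrow> nat \<Rightarrow> nat \<Rightarrow> nat \<Rightarrow> nat" where
  "F_red a b q x = (THE y. y \<in> F_carrier a b q \<and> [y = x] (mod (b * q)))"

definition F_add :: "nat \<Rightarrow> nat \<Rightarrow> nat \<Rightarrow> nat list \<Rightarrow> nat" where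
  "F_add a b q xs = F_red a b q (sum_list xs)"

definition F_mult :: "nat \<Rightarrow> nat \<Rightarrow> nat \<Rightarrow> nat list \<Rightarrow> nat" where
  "F_mult a b q xs = F_red a b q (prod_list xs)"

end

theory Submission
  imports Defs
begin

lemma F_mem:
  assumes "1 \<le> b" "a < b"
  shows "x \<in> F_carrier a b q \<longleftrightarrow> x < b*q \<and> x mod b = a"
proof
  assume "x \<in> F_carrier a b q"
  then obtain k where k: "k < q" "x = a + b*k" unfolding F_carrier_def by auto
  have "a + b*k < b + b*k" using assms by simp
  also have "\<dots> = b*(k+1)" by simp
  also have "\<dots> \<le> b*q" using k by (intro mult_le_mono2) simp
  finally show "x < b*q \<and> x mod b = a" using k assms by simp
next
  assume h: "x < b*q \<and> x mod b = a"
  have "x div b < q" using h by (intro less_mult_imp_div_less) (simp add: mult.commute)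
  moreover have "x = a + b*(x div b)" using h by (metis add.commute div_mult_mod_eq mult.commute)
  ultimately show "x \<in> F_carrier a b q" unfolding F_carrier_def by blast
qed

lemma F_red_eq:
  assumes "1 \<le> b" "a < b" "1 \<le> q" "x mod b = a"
  shows "F_red a b q x = x mod (b*q)"
  unfolding F_red_def
proof (rule the_equality)
  have "b*q > 0" using assms by simp
  then show "x mod (b*q) \<in> F_carrier a b q \<and> [x mod (b*q) = x] (mod (b*q))"
    using assms by (simp add: F_mem cong_def mod_mod_cancel)
  fix y assume "y \<in> F_carrier a b q \<and> [y = x] (mod (b*q))"
  then show "y = x mod (b*q)" using assms by (metis F_mem cong_def mod_less)
qed

lemma idx_ne:
  fixes kz t q :: nat
  assumes "kz < q" "1 \<le> t" "t < q"
  shows "(kz + t) mod q \<noteq> kz"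
proof (cases "kz + t < q")
  case True then show ?thesis using assms by simp
next
  case False
  then have "(kz + t) mod q = (kz + t - q) mod q" by (simp add: le_mod_geq)
  also have "\<dots> = kz + t - q" using assms by simp
  finally have e: "(kz + t) mod q = kz + t - q" .
  have "kz + t - q \<noteq> kz" using assms False by arith
  then show ?thesis using e by simp
qed

lemma m1_dvd_b:
  fixes a b m :: nat
  assumes "1 \<le> b" "2 \<le> m" "[m * a = a] (mod b)"
    and "\<forall>m'. 2 \<le> m' \<and> m' < m \<longrightarrow> \<not> [m' * a = a] (mod b)"
  shows "(m-1) dvd b" and "b dvd (m-1)*a"
proof -
  have "m*a \<ge> a" using assms by simp
  then have "b dvd (m*a - a)" using assms(3) cong_altdef_nat by blast
  moreover have "m*a - a = (m-1)*a" by (simp add: diff_mult_distrib)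
  ultimately show d1: "b dvd (m-1)*a" by simp
  define h where "h = gcd a b"
  have hpos: "h > 0" using assms(1) by (simp add: h_def)
  define b' where "b' = b div h"
  define a' where "a' = a div h"
  have bb: "b = b'*h" and aa: "a = a'*h" by (simp_all add: h_def b'_def a'_def)
  have cop: "coprime a' b'" unfolding a'_def b'_def h_def
    using div_gcd_coprime[of a b] assms(1) by simp
  have b'pos: "b' \<ge> 1" using bb assms(1) by (cases b') auto
  have "b'*h dvd ((m-1)*a')*h" using d1 bb aa by (simp add: mult.assoc)
  then have "b' dvd (m-1)*a'" using hpos by simp
  then have "b' dvd m-1" using cop by (simp add: coprime_commute coprime_dvd_mult_left_iff)
  then have le1: "b' \<le> m-1" using assms(2) by (intro dvd_imp_le) auto
  have "(b'+1)*a = b*a' + a" using bb aa by (simp add: algebra_simps)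
  then have "[(b'+1)*a = a] (mod b)" by (simp add: cong_def)
  then have "\<not> (b'+1 < m)" using assms(4) b'pos by (metis add_le_cancel_right one_add_one)
  then have "m - 1 = b'" using le1 by simp
  then show "(m-1) dvd b" using bb by simp
qed

theorem mainTheorem4:
  fixes a b m n q :: nat
  assumes "1 \<le> b" and "a < b" and "1 \<le> q"
    and "2 \<le> m" and "[m * a = a] (mod b)"
    and "\<forall>m'. 2 \<le> m' \<and> m' < m \<longrightarrow> \<not> [m' * a = a] (mod b)"
    and "2 \<le> n" and "[a ^ n = a] (mod b)"
    and "\<forall>n'. 2 \<le> n' \<and> n' < n \<longrightarrow> \<not> [a ^ n' = a] (mod b)"
    and "polyadic_field (F_carrier a b q) m n (F_add a b q) (F_mult a b q)"
  shows "\<not> (\<exists>S. S \<subset> F_carrier a b q \<and> S \<noteq> {} \<and>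
              closed_on S m (F_add a b q) \<and> closed_on S n (F_mult a b q) \<and>
              polyadic_field S m n (F_add a b q) (F_mult a b q))"
proof
  assume "\<exists>S. S \<subset> F_carrier a b q \<and> S \<noteq> {} \<and>
              closed_on S m (F_add a b q) \<and> closed_on S n (F_mult a b q) \<and>
              polyadic_field S m n (F_add a b q) (F_mult a b q)"
  then obtain S where SF: "S \<subset> F_carrier a b q" and Sne: "S \<noteq> {}"
    and Sadd: "closed_on S m (F_add a b q)" and Smul: "closed_on S n (F_mult a b q)"
    and Sfield: "polyadic_field S m n (F_add a b q) (F_mult a b q)" by blast
  define N where "N = b*q"
  define F where "F = F_carrier a b q"
  have Npos: "0 < N" using assms by (simp add: N_def)
  have Fmem: "\<And>x. x \<in> F \<longleftrightarrow> x < N \<and> x mod b = a"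
    using F_mem assms(1,2) by (simp add: F_def N_def)
  have SinF: "\<And>x. x \<in> S \<Longrightarrow> x < N \<and> x mod b = a" using SF Fmem F_def by auto
  have congA: "[x = a] (mod b)" if "x mod b = a" for x using that assms(2) by (simp add: cong_def)
  have Fred: "\<And>x. x mod b = a \<Longrightarrow> F_red a b q x = x mod N"
    using F_red_eq assms(1,2,3) by (simp add: N_def)
  have m1: "(m-1) dvd b" "b dvd (m-1)*a" using m1_dvd_b assms(1,4,5,6) by blast+
  have ma: "[m*a = a] (mod b)" by fact
  have two: "\<exists>w\<in>S. w \<noteq> z" for z
  proof (rule ccontr)
    assume "\<not> (\<exists>w\<in>S. w \<noteq> z)"
    then have Sz: "S = {z}" using Sne by auto
    have "is_zero S n (F_mult a b q) z"
      unfolding is_zero_def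
    proof (intro conjI allI impI)
      show "z \<in> S" using Sz by simp
      fix i xs assume h: "i < n \<and> length xs = n - 1 \<and> set xs \<subseteq> S"
      have "length (take i xs @ z # drop i xs) = n" using h assms(7) by auto
      moreover have "set (take i xs @ z # drop i xs) \<subseteq> S" using h Sz
        by (auto dest: in_set_takeD in_set_dropD)
      ultimately have "F_mult a b q (take i xs @ z # drop i xs) \<in> S"
        using Smul unfolding closed_on_def by blast
      then show "F_mult a b q (take i xs @ z # drop i xs) = z" using Sz by simp
    qed
    then have "nary_group (S - {z}) n (F_mult a b q)"
      using Sfield unfolding polyadic_field_def by (auto split: if_splits)
    then show False using Sz unfolding nary_group_def by simp
  qed
  obtain T w where Tgrp: "nary_group T n (F_mult a b q)" and wS: "w \<in> S" and wT: "w \<in> T"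
    and TF: "T \<subseteq> F"
    and Tbig: "\<And>s. 1 \<le> s \<Longrightarrow> 2*s \<le> q \<Longrightarrow> 3 \<le> q \<Longrightarrow>
                  \<exists>k1<q. a + b*k1 \<in> T \<and> a + b*((k1+s) mod q) \<in> T"
  proof (cases "\<exists>z. is_zero F n (F_mult a b q) z")
    case True
    then obtain z where z: "is_zero F n (F_mult a b q) z" by blast
    have grp: "nary_group (F - {z}) n (F_mult a b q)"
      using assms(10) True z unfolding polyadic_field_def F_def by auto
    obtain w where w: "w \<in> S" "w \<noteq> z" using two by blast
    have zF: "z \<in> F" using z unfolding is_zero_def by simp
    then have "z \<in> F_carrier a b q" by (simp add: F_def)
    then obtain kz where kz: "kz < q" "z = a + b*kz" unfolding F_carrier_def by auto
    have inF: "a + b*k \<in> F" if "k < q" for k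
      using that unfolding F_def F_carrier_def by blast
    have ne: "a + b*k \<noteq> z" if "k \<noteq> kz" for k using that kz assms(1) by simp
    show ?thesis
    proof (rule that[OF grp])
      show "w \<in> S" by fact
      show "w \<in> F - {z}" using w SF F_def by auto
      show "F - {z} \<subseteq> F" by auto
      fix s :: nat assume s: "1 \<le> s" "2*s \<le> q" "3 \<le> q"
      define k1 where "k1 = (kz + 1) mod q"
      have k1q: "k1 < q" using assms(3) by (simp add: k1_def)
      have "k1 \<noteq> kz" unfolding k1_def using idx_ne[of kz q 1] kz s by simp
      moreover have "(k1 + s) mod q \<noteq> kz"
      proof -
        have "(k1 + s) mod q = (kz + (1 + s)) mod q" unfolding k1_def
          by (simp add: mod_add_left_eq add.assoc)
        moreover have "(kz + (1 + s)) mod q \<noteq> kz" using idx_ne[of kz q "1+s"] kz s by simp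
        ultimately show ?thesis by simp
      qed
      ultimately show "\<exists>k1<q. a + b*k1 \<in> F - {z} \<and> a + b*((k1+s) mod q) \<in> F - {z}"
        using k1q inF ne assms(3) by (intro exI[of _ k1]) auto
    qed
  next
    case False
    have grp: "nary_group F n (F_mult a b q)"
      using assms(10) False unfolding polyadic_field_def F_def by auto
    obtain w where w: "w \<in> S" using Sne by blast
    have inF: "a + b*k \<in> F" if "k < q" for k
      using that unfolding F_def F_carrier_def by blast
    show ?thesis
    proof (rule that[OF grp w])
      show "w \<in> F" using w SF F_def by auto
      show "F \<subseteq> F" by simp
      fix s :: nat assume s: "1 \<le> s" "2*s \<le> q" "3 \<le> q"
      show "\<exists>k1<q. a + b*k1 \<in> F \<and> a + b*((k1+s) mod q) \<in> F"
        using inF[of 0] inF[of "s mod q"] assms(3) by (intro exI[of _ 0]) auto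
    qed
  qed
  obtain y where yS: "y \<in> S" "y \<noteq> w" using two by blast
  have wb: "w mod b = a" "w < N" using SinF wS by auto
  have yb: "y mod b = a" "y < N" using SinF yS by auto
  define P where "P d \<longleftrightarrow> (\<forall>x\<in>S. (x + d) mod N \<in> S)" for d
  have P0: "P 0" using SinF by (simp add: P_def)
  have PN: "P N" using SinF by (simp add: P_def)
  have Padd: "P (d1 + d2)" if "P d1" "P d2" for d1 d2
  proof -
    have "(x + (d1+d2)) mod N \<in> S" if "x \<in> S" for x
    proof -
      have "(x + d1) mod N \<in> S" using \<open>P d1\<close> that P_def by auto
      then have "((x+d1) mod N + d2) mod N \<in> S" using \<open>P d2\<close> P_def by auto
      then show ?thesis by (simp add: mod_add_left_eq add.assoc)
    qed
    then show ?thesis by (simp add: P_def)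
  qed
  have Pmult: "P (k*d)" if "P d" for k d
    by (induction k) (use P0 Padd that in auto)
  have Pmod: "P d'" if "P d" "d mod N = d' mod N" for d d'
  proof -
    have "(x + d') mod N \<in> S" if "x \<in> S" for x
    proof -
      have "(x + d) mod N \<in> S" using \<open>P d\<close> that P_def by auto
      moreover have "(x + d) mod N = (x + d') mod N"
        by (metis \<open>d mod N = d' mod N\<close> mod_add_right_eq)
      ultimately show ?thesis by simp
    qed
    then show ?thesis by (simp add: P_def)
  qed
  have Pgcd: "P (gcd d1 d2)" if "P d1" "P d2" for d1 d2
  proof (cases "d1 = 0")
    case True then show ?thesis using that by simp
  next
    case False
    then obtain x y where xy: "d1*x = d2*y + gcd d1 d2" using bezout_nat by blast
    obtain N' where N': "N = Suc N'" using Npos by (cases N) auto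
    have "P (x*d1 + N'*y*d2)" using Padd Pmult that by (simp add: mult.assoc)
    moreover have "x*d1 + N'*y*d2 = gcd d1 d2 + N*(y*d2)" using xy N'
      by (simp add: algebra_simps)
    ultimately show ?thesis using Pmod by (metis mod_mult_self2)
  qed
  define d1 where "d1 = (m-1)*w"
  define d2 where "d2 = y + (m-2)*w"
  have Pd1: "P d1" unfolding P_def
  proof
    fix x assume xS: "x \<in> S"
    let ?xs = "x # replicate (m-1) w"
    have "length ?xs = m" using assms(4) by simp
    moreover have "set ?xs \<subseteq> S" using xS wS by auto
    ultimately have "F_add a b q ?xs \<in> S" using Sadd unfolding closed_on_def by blast
    moreover have "sum_list ?xs = x + d1" by (simp add: d1_def sum_list_replicate)
    moreover have "(x + d1) mod b = a"
    proof -
      have "[x + (m-1)*w = a + (m-1)*a] (mod b)"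
        using congA SinF xS wb by (intro cong_add cong_mult) auto
      moreover have "a + (m-1)*a = m*a" using assms(4) by (cases m) auto
      ultimately have "[x + d1 = a] (mod b)" using ma unfolding d1_def
        using cong_trans by metis
      then show ?thesis using assms(2) by (simp add: cong_def)
    qed
    ultimately show "(x + d1) mod N \<in> S" using Fred unfolding F_add_def by simp
  qed
  have Pd2: "P d2" unfolding P_def
  proof
    fix x assume xS: "x \<in> S"
    let ?xs = "x # y # replicate (m-2) w"
    have "length ?xs = m" using assms(4) by simp
    moreover have "set ?xs \<subseteq> S" using xS wS yS by auto
    ultimately have "F_add a b q ?xs \<in> S" using Sadd unfolding closed_on_def by blast
    moreover have "sum_list ?xs = x + d2" by (simp add: d2_def sum_list_replicate)
    moreover have "(x + d2) mod b = a"
    proof -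
      have "[x + (y + (m-2)*w) = a + (a + (m-2)*a)] (mod b)"
        using congA SinF xS wb yb by (intro cong_add cong_mult) auto
      moreover have "a + (a + (m-2)*a) = m*a" using assms(4)
        by (metis add_2_eq_Suc le_add_diff_inverse mult_Suc add.commute)
      ultimately have "[x + d2 = a] (mod b)" using ma unfolding d2_def
        using cong_trans by metis
      then show ?thesis using assms(2) by (simp add: cong_def)
    qed
    ultimately show "(x + d2) mod N \<in> S" using Fred unfolding F_add_def by simp
  qed
  define G where "G = gcd (gcd d1 d2) N"
  have PG: "P G" unfolding G_def using Pgcd Pd1 Pd2 PN by blast
  have bd1: "b dvd d1"
  proof -
    have "[(m-1)*w = (m-1)*a] (mod b)" using congA wb by (intro cong_mult) auto
    then show ?thesis using m1(2) cong_dvd_iff unfolding d1_def by blast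
  qed
  have bd2: "b dvd d2"
  proof -
    have "[y + (m-2)*w = a + (m-2)*a] (mod b)" using congA wb yb by (intro cong_add cong_mult) auto
    moreover have "a + (m-2)*a = (m-1)*a" using assms(4)
      by (metis Suc_diff_Suc Suc_1 less_le_trans lessI mult_Suc)
    ultimately show ?thesis using m1(2) cong_dvd_iff unfolding d2_def by metis
  qed
  have bG: "b dvd G" unfolding G_def N_def using bd1 bd2 by simp
  have nbG: "\<not> G dvd b"
  proof
    assume "G dvd b"
    then obtain c where c: "b = G*c" by blast
    have Pb: "P b" using Pmult[OF PG, of c] c by (simp add: mult.commute)
    have "F \<subseteq> S"
    proof
      fix f assume "f \<in> F"
      then obtain kf where kf: "kf < q" "f = a + b*kf" unfolding F_def F_carrier_def by auto
      define kw where "kw = w div b"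
      have kw: "w = a + b*kw" using wb by (metis add.commute div_mult_mod_eq mult.commute kw_def)
      have kwq: "kw < q" using wb kw N_def by (metis F_def F_mem Fmem assms(1,2) kw_def
            less_mult_imp_div_less mult.commute)
      have "(w + (q - kw + kf)*b) mod N \<in> S" using Pmult[OF Pb] wS P_def by auto
      moreover have "w + (q - kw + kf)*b = f + N*1"
      proof -
        obtain d where d: "q = kw + d" using kwq less_imp_add_positive by blast
        show ?thesis using kw kf by (simp add: d N_def algebra_simps)
      qed
      moreover have "f < N" using \<open>f \<in> F\<close> Fmem by auto
      then have "(f + N*1) mod N = f" by simp
      ultimately show "f \<in> S" by simp
    qed
    then show False using SF F_def by auto
  qed
  obtain g where g: "G = b*g" using bG by blast
  have "G \<noteq> 0" unfolding G_def using Npos by simp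
  then have g0: "g \<noteq> 0" using g by auto
  have g1: "g \<noteq> 1" using g nbG by auto
  have gq: "g dvd q" using g assms(1) unfolding G_def N_def
    by (metis gcd_dvd2 mult_dvd_mono nat_mult_dvd_cancel_disj not_one_le_zero)
  have gw: "g dvd w"
  proof -
    obtain h2 where h2: "b = (m-1)*h2" using m1(1) by blast
    have "G dvd d1" unfolding G_def by (meson dvd_trans gcd_dvd1)
    then have "(m-1)*(h2*g) dvd (m-1)*w" using g h2 d1_def by (simp add: mult.assoc)
    then have "h2*g dvd w" using assms(4) by simp
    then show ?thesis by (meson dvd_mult_right)
  qed
  have gW: "g dvd w^(n-1)"
  proof -
    obtain k where k: "n - 1 = Suc k" using assms(7) by (cases "n - 1") auto
    show ?thesis using gw k by (metis dvd_mult2 power_Suc)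
  qed
  define s where "s = q div g"
  have qs: "q = g*s" using gq s_def by simp
  have s1: "1 \<le> s" using qs assms(3) by (cases s) auto
  have s2: "2*s \<le> q" using qs g0 g1 by simp
  have sq: "s < q" using s1 s2 by simp
  have q3: "3 \<le> q"
  proof -
    obtain f where f: "f \<in> F" "f \<notin> S" using SF F_def by auto
    have fin: "finite F" unfolding F_def F_carrier_def by simp
    have "card F \<le> q"
    proof -
      have "F = (\<lambda>k. a + b*k) ` {..<q}" unfolding F_def F_carrier_def by auto
      then show ?thesis by (metis card_image_le card_lessThan finite_lessThan)
    qed
    moreover have "card {w, y, f} \<le> card F"
      using fin f wS yS SF F_def by (intro card_mono) auto
    moreover have "f \<noteq> w" "f \<noteq> y" using f wS yS by auto
    then have "card {w, y, f} = 3" using yS by simp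
    ultimately show ?thesis by simp
  qed
  obtain k1 where k1: "k1 < q" "a + b*k1 \<in> T" "a + b*((k1+s) mod q) \<in> T"
    using Tbig[OF s1 s2 q3] by blast
  define u where "u = a + b*k1"
  define u' where "u' = a + b*((k1+s) mod q)"
  have uu': "u \<noteq> u'" unfolding u_def u'_def using idx_ne[OF k1(1) s1 sq] assms(1) by simp
  define W where "W = w^(n-1)"
  have ub: "u mod b = a" "u' mod b = a" using k1 TF Fmem u_def u'_def by auto
  have prodb: "(v * W) mod b = a" if "v mod b = a" for v
  proof -
    have "[v * W = a * a^(n-1)] (mod b)" unfolding W_def using congA that wb
      by (intro cong_mult cong_pow) auto
    moreover have "a * a^(n-1) = a^n" using assms(7) by (cases n) auto
    ultimately have "[v*W = a] (mod b)" using assms(8) cong_trans by metis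
    then show ?thesis using assms(2) by (simp add: cong_def)
  qed
  have cong_uu: "[u'*W = u*W] (mod N)"
  proof -
    have e1: "b*((k1+s) mod q) = (b*(k1+s)) mod N" unfolding N_def by (rule mult_mod_right)
    have "[u' = a + b*(k1+s)] (mod N)" unfolding cong_def u'_def e1 by (rule mod_add_right_eq)
    moreover have "a + b*(k1+s) = u + b*s" by (simp add: u_def algebra_simps)
    ultimately have "[u' = u + b*s] (mod N)" by simp
    then have "[u'*W = (u + b*s)*W] (mod N)" by (simp add: cong_mult)
    moreover have "[(u + b*s)*W = u*W] (mod N)"
    proof -
      obtain r where r: "W = g*r" using gW W_def by blast
      have "(u + b*s)*W = u*W + N*r" using r qs by (simp add: N_def algebra_simps)
      then show ?thesis by (simp add: cong_def)
    qed
    ultimately show ?thesis using cong_trans by blast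
  qed
  let ?xs = "replicate (n-1) w"
  have eqm: "F_mult a b q (u # ?xs) = F_mult a b q (u' # ?xs)"
    unfolding F_mult_def using Fred prodb ub cong_uu
    by (simp add: W_def cong_def)
  have xsT: "set ?xs \<subseteq> T" using wT by (auto simp: set_replicate_conv_if)
  have uT: "u \<in> T" "u' \<in> T" using k1 u_def u'_def by auto
  have "F_mult a b q (u # ?xs) \<in> T" using Tgrp xsT uT assms(7)
    unfolding nary_group_def closed_on_def by auto
  have all: "\<forall>i xs x0. i < n \<and> length xs = n - 1 \<and> set xs \<subseteq> T \<and> x0 \<in> T \<longrightarrow>
        (\<exists>!u. u \<in> T \<and> F_mult a b q (take i xs @ u # drop i xs) = x0)"
    using Tgrp unfolding nary_group_def by blast
  have pre: "0 < n \<and> length ?xs = n - 1 \<and> set ?xs \<subseteq> T \<and> F_mult a b q (u # ?xs) \<in> T"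
    using xsT assms(7) \<open>F_mult a b q (u # ?xs) \<in> T\<close> by simp
  have "\<exists>!v. v \<in> T \<and> F_mult a b q (take 0 ?xs @ v # drop 0 ?xs) = F_mult a b q (u # ?xs)"
    using all[rule_format, OF pre] .
  then have "u = u'" using uT eqm by auto
  then show False using uu' by simp
qed

end
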